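(* Assume $\mathrm{char}(\mathbb{F}_q)>3$. Then $\mathfrak{sl}_2(\mathbb{F}_q)$ has a COD, unique up to conjugacy, if and only if $q\equiv 1\pmod 4$.
   Context: $\mathbb{F}_q$ is the finite field with $q$ elements. $\mathfrak{sl}_n(\mathbb{F})$ denotes the Lie algebra of $n\times n$ traceless matrices over $\mathbb{F}$. A Cartan subalgebra is a nilpotent self-normalizing subalgebra. A classical Cartan subalgebra of $\mathfrak{L}=\mathfrak{sl}_n(\mathbb{F})$ (with $\ell=\mathrm{char}\,\mathbb{F}$) is an abelian Cartan subalgebra $H$ such that: (a) $\mathfrak{L}=\bigoplus_\alpha \mathfrak{L}_\alpha$ with $\mathfrak{L}_\alpha=\{x: [x,h]=\alpha(h)x\ \forall h\in H\}$ over linear functionals $\alpha$ on $H$ (roots); (b) for each root $\alpha\ne0$, $[\mathfrak{L}_\alpha,\mathfrak{L}_{-\alpha}]$ is one-dimensional; (c) for roots $\alpha,\beta$ with $\beta\neq0$, not all $\alpha+k\beta$ ($1\le k\le \ell-1$) are roots. The Killing form is $K(A,B)=2n\,\mathrm{Tr}(AB)$. A COD of $\mathfrak{sl}_n(\mathbb{F})$ is a vector space decomposition $\mathfrak{sl}_n(\mathbb{F})=H_0\oplus\cdots\oplus H_n$ into classical Cartan subalgebras that are pairwise orthogonal with respect to $K$. Two CODs are conjugate if there is a Lie algebra automorphism of $\mathfrak{sl}_n(\mathbb{F})$ mapping each component of the first decomposition onto exactly one component of the second. *)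

theory Defs
  imports "HOL-Analysis.Analysis"
begin

type_synonym 'a mat2 = "'a^2^2"

definition smul :: "'a::field \<Rightarrow> 'a mat2 \<Rightarrow> 'a mat2" where
  "smul c A = (\<chi> i j. c * A $ i $ j)"

definition sl2 :: "('a::field) mat2 set" where
  "sl2 = {A. trace A = 0}"

definition lie_bracket :: "('a::field) mat2 \<Rightarrow> 'a mat2 \<Rightarrow> 'a mat2" where
  "lie_bracket x y = x ** y - y ** x"

definition killing :: "('a::field) mat2 \<Rightarrow> 'a mat2 \<Rightarrow> 'a" where
  "killing A B = 2 * 2 * trace (A ** B)"

definition lin_subspace :: "('a::field) mat2 set \<Rightarrow> bool" where
  "lin_subspace S \<longleftrightarrow> 0 \<in> S \<and> (\<forall>x\<in>S. \<forall>y\<in>S. x + y \<in> S) \<and> (\<forall>c. \<forall>x\<in>S. smul c x \<in> S)"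

definition lspan :: "('a::field) mat2 set \<Rightarrow> 'a mat2 set" where
  "lspan S = \<Inter> {T. lin_subspace T \<and> S \<subseteq> T}"

definition one_dimensional :: "('a::field) mat2 set \<Rightarrow> bool" where
  "one_dimensional S \<longleftrightarrow> (\<exists>v. v \<noteq> 0 \<and> S = {smul c v | c. True})"

definition subalgebra :: "('a::field) mat2 set \<Rightarrow> bool" where
  "subalgebra H \<longleftrightarrow> lin_subspace H \<and> H \<subseteq> sl2 \<and> (\<forall>x\<in>H. \<forall>y\<in>H. lie_bracket x y \<in> H)"

fun lcs :: "('a::field) mat2 set \<Rightarrow> nat \<Rightarrow> 'a mat2 set" where
  "lcs H 0 = H"
| "lcs H (Suc k) = lspan {lie_bracket x y | x y. x \<in> H \<and> y \<in> lcs H k}"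

definition nilpotent_alg :: "('a::field) mat2 set \<Rightarrow> bool" where
  "nilpotent_alg H \<longleftrightarrow> (\<exists>k. lcs H k \<subseteq> {0})"

definition normalizer :: "('a::field) mat2 set \<Rightarrow> 'a mat2 set" where
  "normalizer H = {x \<in> sl2. \<forall>h\<in>H. lie_bracket x h \<in> H}"

definition cartan :: "('a::field) mat2 set \<Rightarrow> bool" where
  "cartan H \<longleftrightarrow> subalgebra H \<and> nilpotent_alg H \<and> normalizer H = H"

definition abelian :: "('a::field) mat2 set \<Rightarrow> bool" where
  "abelian H \<longleftrightarrow> (\<forall>x\<in>H. \<forall>y\<in>H. lie_bracket x y = 0)"

text \<open>Linear functionals on H, represented as functions that vanish outside H
  (so that each functional on H has exactly one representative).\<close>
definition functional_on :: "('a::field) mat2 set \<Rightarrow> ('a mat2 \<Rightarrow> 'a) \<Rightarrow> bool" where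
  "functional_on H \<alpha> \<longleftrightarrow> (\<forall>x\<in>H. \<forall>y\<in>H. \<alpha> (x + y) = \<alpha> x + \<alpha> y)
      \<and> (\<forall>c. \<forall>x\<in>H. \<alpha> (smul c x) = c * \<alpha> x) \<and> (\<forall>x. x \<notin> H \<longrightarrow> \<alpha> x = 0)"

definition root_space :: "('a::field) mat2 set \<Rightarrow> ('a mat2 \<Rightarrow> 'a) \<Rightarrow> 'a mat2 set" where
  "root_space H \<alpha> = {x \<in> sl2. \<forall>h\<in>H. lie_bracket x h = smul (\<alpha> h) x}"

definition roots :: "('a::field) mat2 set \<Rightarrow> ('a mat2 \<Rightarrow> 'a) set" where
  "roots H = {\<alpha>. functional_on H \<alpha> \<and> root_space H \<alpha> \<noteq> {0}}"

definition classical_cartan :: "('a::{finite,field}) mat2 set \<Rightarrow> bool" where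
  "classical_cartan H \<longleftrightarrow> cartan H \<and> abelian H
   \<comment> \<open>(a) sl2 is the direct sum of the root spaces\<close>
   \<and> (\<forall>x\<in>sl2. \<exists>!f. (\<forall>\<alpha>. \<alpha> \<notin> roots H \<longrightarrow> f \<alpha> = 0)
          \<and> (\<forall>\<alpha>\<in>roots H. f \<alpha> \<in> root_space H \<alpha>) \<and> x = (\<Sum>\<alpha>\<in>roots H. f \<alpha>))
   \<comment> \<open>(b)\<close>
   \<and> (\<forall>\<alpha>\<in>roots H. \<alpha> \<noteq> (\<lambda>_. 0) \<longrightarrow>
        one_dimensional (lspan {lie_bracket x y | x y. x \<in> root_space H \<alpha>
                                  \<and> y \<in> root_space H (\<lambda>h. - \<alpha> h)}))
   \<comment> \<open>(c)\<close>
   \<and> (\<forall>\<alpha>\<in>roots H. \<forall>\<beta>\<in>roots H. \<beta> \<noteq> (\<lambda>_. 0) \<longrightarrow>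
        (\<exists>k\<in>{1..CHAR('a) - 1}. (\<lambda>h. \<alpha> h + of_nat k * \<beta> h) \<notin> roots H))"

text \<open>A COD of sl_2 (n = 2): components H 0, H 1, H 2.\<close>
definition is_COD :: "(nat \<Rightarrow> ('a::{finite,field}) mat2 set) \<Rightarrow> bool" where
  "is_COD H \<longleftrightarrow> (\<forall>i\<le>2. classical_cartan (H i))
    \<and> (\<forall>i\<le>2. \<forall>j\<le>2. i \<noteq> j \<longrightarrow> (\<forall>x\<in>H i. \<forall>y\<in>H j. killing x y = 0))
    \<and> (\<forall>x\<in>sl2. \<exists>!h. (\<forall>i\<le>2. h i \<in> H i) \<and> (\<forall>i>2. h i = 0) \<and> x = (\<Sum>i\<le>2. h i))"

definition lie_automorphism :: "(('a::field) mat2 \<Rightarrow> 'a mat2) \<Rightarrow> bool" where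
  "lie_automorphism \<phi> \<longleftrightarrow> bij_betw \<phi> sl2 sl2
    \<and> (\<forall>x\<in>sl2. \<forall>y\<in>sl2. \<phi> (x + y) = \<phi> x + \<phi> y)
    \<and> (\<forall>c. \<forall>x\<in>sl2. \<phi> (smul c x) = smul c (\<phi> x))
    \<and> (\<forall>x\<in>sl2. \<forall>y\<in>sl2. \<phi> (lie_bracket x y) = lie_bracket (\<phi> x) (\<phi> y))"

definition COD_conjugate :: "(nat \<Rightarrow> ('a::field) mat2 set) \<Rightarrow> (nat \<Rightarrow> 'a mat2 set) \<Rightarrow> bool" where
  "COD_conjugate H H' \<longleftrightarrow> (\<exists>\<phi>. lie_automorphism \<phi>
      \<and> (\<forall>i\<le>2. \<exists>!j. j \<le> 2 \<and> \<phi> ` H i = H' j))"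

end

theory Submission
  imports Defs "HOL-Computational_Algebra.Polynomial"
begin

lemmas M = vec_eq_iff forall_2 sum_2 matrix_matrix_mult_def smul_def lie_bracket_def trace_def mat_def

definition sp :: "('a::field) mat2 \<Rightarrow> 'a mat2 set" where
  "sp x = {smul c x | c. True}"

lemma smul_smul[simp]: "smul c (smul d x) = smul (c*d) x" by (simp add: M)
lemma smul_one[simp]: "smul 1 x = x" by (simp add: M)
lemma smul_zero[simp]: "smul 0 x = 0" "smul c 0 = 0" by (simp_all add: M)
lemma smul_add: "smul c (x + y) = smul c x + smul c y" by (simp add: M algebra_simps)
lemma smul_add2: "smul c x + smul d x = smul (c + d) x" by (simp add: M algebra_simps)
lemma smul_eq_0: "smul c x = 0 \<longleftrightarrow> c = 0 \<or> x = 0" by (auto simp add: M)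
lemma smul_cancel: "x \<noteq> 0 \<Longrightarrow> smul c x = smul d x \<Longrightarrow> c = d"
  by (simp add: M) (metis mult_right_cancel)
lemma smul_minus: "- smul c x = smul (-c) x" by (simp add: M)
lemma smul_diff: "smul c x - smul d x = smul (c - d) x" by (simp add: M algebra_simps)
lemma trace_smul: "trace (smul c x) = c * trace x" by (simp add: M algebra_simps)
lemma lb_smul_l: "lie_bracket (smul c x) y = smul c (lie_bracket x y)" by (simp add: M algebra_simps)
lemma lb_smul_r: "lie_bracket x (smul c y) = smul c (lie_bracket x y)" by (simp add: M algebra_simps)
lemma lb_add_l: "lie_bracket (x + z) y = lie_bracket x y + lie_bracket z y" by (simp add: M algebra_simps)
lemma lb_add_r: "lie_bracket x (y + z) = lie_bracket x y + lie_bracket x z" by (simp add: M algebra_simps)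
lemma lb_self[simp]: "lie_bracket x x = 0" by (simp add: lie_bracket_def)
lemma lb_0[simp]: "lie_bracket x 0 = 0" "lie_bracket 0 x = 0" by (simp_all add: lie_bracket_def)
lemma lb_anti: "lie_bracket y x = - lie_bracket x y" by (simp add: lie_bracket_def)
lemma mul_smul_l: "smul c x ** y = smul c (x ** y)" by (simp add: M algebra_simps sum_distrib_left)
lemma mul_smul_r: "x ** smul c y = smul c (x ** y)" by (simp add: M algebra_simps)
lemma killing_eq: "killing x y = 4 * trace (x ** y)" by (simp add: killing_def)

lemma sl2_add: "x \<in> sl2 \<Longrightarrow> y \<in> sl2 \<Longrightarrow> x + y \<in> sl2" by (simp add: sl2_def trace_add)
lemma sl2_smul: "x \<in> sl2 \<Longrightarrow> smul c x \<in> sl2" by (simp add: sl2_def trace_smul)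
lemma sl2_0: "0 \<in> sl2" by (simp add: sl2_def M)
lemma sl2_lb: "lie_bracket x y \<in> sl2" by (simp add: sl2_def lie_bracket_def trace_sub trace_mul_sym[of x y])
lemma sl2_iff: "x \<in> sl2 \<longleftrightarrow> x$2$2 = - x$1$1" by (simp add: sl2_def M eq_commute[of "x$2$2"] neg_eq_iff_add_eq_0)

lemma sp_self: "x \<in> sp x" unfolding sp_def by (intro CollectI exI[of _ 1]) simp
lemma sp_smul: "smul c x \<in> sp x" unfolding sp_def by auto
lemma sp_0: "0 \<in> sp x" using sp_smul[of 0 x] by simp
lemma sp_sub: "x \<in> sl2 \<Longrightarrow> sp x \<subseteq> sl2" unfolding sp_def by (auto intro: sl2_smul)
lemma sp_lin: "lin_subspace (sp x)"
  unfolding lin_subspace_def sp_def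
  by (auto simp: smul_add2) (metis smul_zero(1))
lemma lspan_sub: "lin_subspace S \<Longrightarrow> lspan S = S"
  unfolding lspan_def by auto
lemma sp_eq: "c \<noteq> 0 \<Longrightarrow> sp (smul c x) = sp x"
  unfolding sp_def apply auto
  apply (rule_tac x="ca/c" in exI) by simp

lemma centralizer:
  fixes x y :: "'a::field mat2"
  assumes "(2::'a) \<noteq> 0" "x \<in> sl2" "y \<in> sl2" "x \<noteq> 0" "lie_bracket y x = 0"
  shows "\<exists>c. y = smul c x"
proof -
  have x22: "x$2$2 = - x$1$1" and y22: "y$2$2 = - y$1$1" using assms(2,3) by (simp_all add: sl2_iff)
  have b: "(lie_bracket y x)$i$j = 0" for i j using assms(5) by simp
  have b11: "y$1$1*x$1$1 + y$1$2*x$2$1 - (x$1$1*y$1$1 + x$1$2*y$2$1) = 0"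
    using b[of 1 1] by (simp add: lie_bracket_def matrix_matrix_mult_def sum_2)
  have b12: "y$1$1*x$1$2 + y$1$2*x$2$2 - (x$1$1*y$1$2 + x$1$2*y$2$2) = 0"
    using b[of 1 2] by (simp add: lie_bracket_def matrix_matrix_mult_def sum_2)
  have b21: "y$2$1*x$1$1 + y$2$2*x$2$1 - (x$2$1*y$1$1 + x$2$2*y$2$1) = 0"
    using b[of 2 1] by (simp add: lie_bracket_def matrix_matrix_mult_def sum_2)
  have "2 * (y$1$1 * x$1$2 - x$1$1 * y$1$2) = 0" using b12 unfolding x22 y22 by (simp add: algebra_simps)
  then have e2: "y$1$1 * x$1$2 = x$1$1 * y$1$2" using assms(1) by simp
  have "2 * (y$2$1 * x$1$1 - x$2$1 * y$1$1) = 0" using b21 unfolding x22 y22 by (simp add: algebra_simps)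
  then have e3: "y$2$1 * x$1$1 = x$2$1 * y$1$1" using assms(1) by simp
  have e1: "y$1$2 * x$2$1 = x$1$2 * y$2$1" using b11 by (simp add: algebra_simps)
  note e = e1 e2 e3
  show ?thesis
  proof (cases "x$1$1 \<noteq> 0")
    case True
    show ?thesis apply (rule exI[of _ "y$1$1 / x$1$1"])
      using x22 y22 e True by (simp add: M field_simps)
  next
    case f1: False
    show ?thesis
    proof (cases "x$1$2 \<noteq> 0")
      case True
      show ?thesis apply (rule exI[of _ "y$1$2 / x$1$2"])
        using x22 y22 e True f1 by (simp add: M field_simps)
    next
      case False
      then have "x$2$1 \<noteq> 0" using f1 assms(2,4) by (auto simp add: M sl2_iff)
      then show ?thesis apply (rule_tac exI[of _ "y$2$1 / x$2$1"])
        using x22 y22 e f1 False by (simp add: M field_simps)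
    qed
  qed
qed

lemma adx3: fixes x y :: "'a::field mat2" assumes "x \<in> sl2"
  shows "lie_bracket (lie_bracket (lie_bracket y x) x) x = smul (4 * (x$1$1*x$1$1 + x$1$2*x$2$1)) (lie_bracket y x)"
  using assms by (simp add: M sl2_iff algebra_simps)

lemma sq_sl2: fixes x :: "'a::field mat2" assumes "x \<in> sl2"
  shows "x ** x = smul (x$1$1*x$1$1 + x$1$2*x$2$1) (mat 1)"
  using assms by (simp add: M sl2_iff algebra_simps)

lemma anticomm: fixes x y :: "'a::field mat2" assumes "x \<in> sl2" "y \<in> sl2"
  shows "x ** y + y ** x = smul (trace (x ** y)) (mat 1)"
  using assms by (simp add: M sl2_iff algebra_simps)

lemma char_nz:
  assumes "CHAR('a::field) > 3"
  shows "(2::'a) \<noteq> 0" "(3::'a) \<noteq> 0" "(4::'a) \<noteq> 0" "(8::'a) \<noteq> 0"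
proof -
  have "\<And>n::nat. 0 < n \<Longrightarrow> n \<le> 3 \<Longrightarrow> of_nat n \<noteq> (0::'a)"
    using assms by (auto simp: of_nat_eq_0_iff_char_dvd dest: dvd_imp_le)
  from this[of 2] this[of 3] show "(2::'a) \<noteq> 0" "(3::'a) \<noteq> 0" by simp_all
  then show "(4::'a) \<noteq> 0" "(8::'a) \<noteq> 0"
    by (metis mult_2 numeral_Bit0 mult_eq_0_iff one_add_one)+
qed

definition E12 :: "'a::field mat2" where "E12 = (\<chi> i j. if i = 1 \<and> j = 2 then 1 else 0)"
definition E21 :: "'a::field mat2" where "E21 = (\<chi> i j. if i = 2 \<and> j = 1 then 1 else 0)"

lemma E12_sl2: "E12 \<in> sl2" by (simp add: E12_def sl2_iff)
lemma E21_sl2: "E21 \<in> sl2" by (simp add: E21_def sl2_iff)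
lemma E12_nz: "E12 \<noteq> 0" by (simp add: E12_def M)
lemma E21_nz: "E21 \<noteq> 0" by (simp add: E21_def M)

lemma not_both_sp: "E12 \<in> sp x \<Longrightarrow> E21 \<in> sp (x::'a::field mat2) \<Longrightarrow> False"
  unfolding sp_def E12_def E21_def by (auto simp: M)

lemma cc_char:
  fixes H :: "'a::{finite,field} mat2 set"
  assumes ch: "CHAR('a) > 3" and cc: "classical_cartan H"
  shows "\<exists>x r. x \<in> sl2 \<and> x \<noteq> 0 \<and> r \<noteq> 0 \<and> H = sp x \<and> x ** x = smul (r*r) (mat 1)"
proof -
  have two: "(2::'a) \<noteq> 0" using char_nz[OF ch] by simp
  have sa: "subalgebra H" and nz: "normalizer H = H" and ab: "abelian H"
    and dec: "\<forall>x\<in>sl2. \<exists>!f. (\<forall>\<alpha>. \<alpha> \<notin> roots H \<longrightarrow> f \<alpha> = 0)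
          \<and> (\<forall>\<alpha>\<in>roots H. f \<alpha> \<in> root_space H \<alpha>) \<and> x = (\<Sum>\<alpha>\<in>roots H. f \<alpha>)"
    using cc unfolding classical_cartan_def cartan_def by auto
  have lin: "lin_subspace H" and Hsl: "H \<subseteq> sl2" using sa unfolding subalgebra_def by auto
  have H0: "0 \<in> H" using lin unfolding lin_subspace_def by auto
  obtain x where xH: "x \<in> H" and xnz: "x \<noteq> 0"
  proof -
    have "\<exists>x\<in>H. x \<noteq> 0"
    proof (rule ccontr)
      assume "\<not> ?thesis"
      then have "H \<subseteq> {0}" by auto
      then have "E12 \<in> normalizer H" using E12_sl2 H0 unfolding normalizer_def by auto
      then show False using nz \<open>H \<subseteq> {0}\<close> E12_nz by auto
    qed
    then show ?thesis using that by auto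
  qed
  have xsl: "x \<in> sl2" using xH Hsl by auto
  have Hsp: "H = sp x"
  proof
    show "H \<subseteq> sp x"
    proof
      fix y assume "y \<in> H"
      then have "lie_bracket y x = 0" using ab xH unfolding abelian_def by auto
      then obtain c where "y = smul c x" using centralizer[OF two xsl _ xnz] \<open>y \<in> H\<close> Hsl by blast
      then show "y \<in> sp x" by (simp add: sp_smul)
    qed
    show "sp x \<subseteq> H" using lin xH unfolding lin_subspace_def sp_def by auto
  qed
  have rs0: "\<And>\<alpha>. 0 \<in> root_space H \<alpha>" unfolding root_space_def using sl2_0 by simp
  obtain \<alpha> where aR: "\<alpha> \<in> roots H" and anz: "\<alpha> \<noteq> (\<lambda>_. 0)"
  proof -
    have "\<exists>\<alpha>\<in>roots H. \<alpha> \<noteq> (\<lambda>_. 0)"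
    proof (rule ccontr)
      assume "\<not> ?thesis"
      then have sub: "roots H \<subseteq> {\<lambda>_. 0}" by auto
      have rsub: "root_space H (\<lambda>_. 0) \<subseteq> sp x"
      proof
        fix y assume y: "y \<in> root_space H (\<lambda>_. 0)"
        then have "lie_bracket y x = 0" "y \<in> sl2" using xH unfolding root_space_def by auto
        then show "y \<in> sp x" using centralizer[OF two xsl _ xnz] sp_smul by metis
      qed
      have "\<And>z. z \<in> sl2 \<Longrightarrow> z \<in> sp x"
      proof -
        fix z :: "'a mat2" assume "z \<in> sl2"
        then obtain f where f: "\<forall>\<alpha>\<in>roots H. f \<alpha> \<in> root_space H \<alpha>" "z = (\<Sum>\<alpha>\<in>roots H. f \<alpha>)"
          using dec by blast
        have "z \<in> root_space H (\<lambda>_. 0)"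
        proof (cases "roots H = {}")
          case True then show ?thesis using f rs0 by simp
        next
          case False
          then have "roots H = {\<lambda>_. 0}" using sub by blast
          then show ?thesis using f by simp
        qed
        then show "z \<in> sp x" using rsub by auto
      qed
      then show False using E12_sl2 E21_sl2 not_both_sp by blast
    qed
    then show ?thesis using that by auto
  qed
  have fa: "functional_on H \<alpha>" and rsnz: "root_space H \<alpha> \<noteq> {0}" using aR unfolding roots_def by auto
  obtain y where yrs: "y \<in> root_space H \<alpha>" and ynz: "y \<noteq> 0" using rsnz rs0 by blast
  have ysl: "y \<in> sl2" and ybr: "lie_bracket y x = smul (\<alpha> x) y" using yrs xH unfolding root_space_def by auto
  define l where "l = \<alpha> x"
  have lnz: "l \<noteq> 0"
  proof
    assume l0: "l = 0"
    have "\<alpha> = (\<lambda>_. 0)"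
    proof
      fix h show "\<alpha> h = 0"
      proof (cases "h \<in> H")
        case True
        then obtain c where "h = smul c x" using Hsp unfolding sp_def by auto
        then show ?thesis using fa xH l0 unfolding functional_on_def l_def by auto
      next
        case False then show ?thesis using fa unfolding functional_on_def by auto
      qed
    qed
    then show False using anz by simp
  qed
  define d where "d = x$1$1*x$1$1 + x$1$2*x$2$1"
  have "smul (l*l*l) y = smul (4*d*l) y"
    using adx3[OF xsl, of y] ybr unfolding l_def d_def by (simp add: lb_smul_l mult.assoc mult.commute mult.left_commute)
  then have "l*l*l = 4*d*l" using smul_cancel ynz by blast
  then have ll: "l*l = 4*d" using lnz by (metis mult.commute mult_right_cancel)
  define r where "r = l / 2"
  have "r * r = d" unfolding r_def using ll two char_nz(3)[OF ch] by (simp add: field_simps)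
  moreover have "r \<noteq> 0" unfolding r_def using lnz two by simp
  moreover have "x ** x = smul d (mat 1)" using sq_sl2[OF xsl] d_def by simp
  ultimately show ?thesis using xsl xnz Hsp by auto
qed

definition cf :: "'a::field mat2 \<Rightarrow> 'a mat2 \<Rightarrow> 'a" where "cf x h = (THE c. h = smul c x)"
definition fn :: "'a::field mat2 \<Rightarrow> 'a \<Rightarrow> 'a mat2 \<Rightarrow> 'a" where
  "fn x t = (\<lambda>h. if h \<in> sp x then cf x h * t else 0)"

lemma cf_smul: "x \<noteq> 0 \<Longrightarrow> cf x (smul c x) = c"
  unfolding cf_def by (rule the_equality) (auto dest: smul_cancel)
lemma fn_smul: assumes "x \<noteq> 0" shows "fn x t (smul c x) = c * t"
  using sp_smul[of c x] cf_smul[OF assms, of c] by (simp add: fn_def)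
lemma fn_x: "x \<noteq> 0 \<Longrightarrow> fn x t x = t" using fn_smul[of x t 1] by simp
lemma fn_inj: "x \<noteq> 0 \<Longrightarrow> fn x t = fn x t' \<Longrightarrow> t = t'" by (metis fn_x)
lemma fn_zero: "fn x 0 = (\<lambda>_. 0)" by (simp add: fn_def fun_eq_iff)
lemma fn_neg: "(\<lambda>h. - fn x t h) = fn x (-t)" by (simp add: fn_def fun_eq_iff)
lemma fn_comb: "(\<lambda>h. fn x a h + k * fn x b h) = fn x (a + k * b)"
  by (simp add: fn_def fun_eq_iff algebra_simps)

lemma fn_functional: "x \<noteq> 0 \<Longrightarrow> functional_on (sp x) (fn x t)"
  unfolding functional_on_def
proof (intro conjI ballI allI impI)
  assume x: "x \<noteq> 0"
  fix h1 h2 assume "h1 \<in> sp x" "h2 \<in> sp x"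
  then obtain a b where "h1 = smul a x" "h2 = smul b x" unfolding sp_def by auto
  then show "fn x t (h1 + h2) = fn x t h1 + fn x t h2"
    using x by (simp add: smul_add2 fn_smul algebra_simps)
next
  assume x: "x \<noteq> 0"
  fix c h assume "h \<in> sp x"
  then obtain a where "h = smul a x" unfolding sp_def by auto
  then show "fn x t (smul c h) = c * fn x t h" using x by (simp add: fn_smul)
next
  fix h assume "h \<notin> sp x" then show "fn x t h = 0" by (simp add: fn_def)
qed

lemma functional_fn: assumes "x \<noteq> 0" "functional_on (sp x) \<alpha>" shows "\<alpha> = fn x (\<alpha> x)"
proof
  fix h show "\<alpha> h = fn x (\<alpha> x) h"
  proof (cases "h \<in> sp x")
    case True
    then obtain a where "h = smul a x" unfolding sp_def by auto
    then show ?thesis using assms sp_self[of x] unfolding functional_on_def by (simp add: fn_smul)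
  next
    case False then show ?thesis using assms unfolding functional_on_def fn_def by auto
  qed
qed

lemma rs_fn: assumes "x \<noteq> 0"
  shows "root_space (sp x) (fn x t) = {y \<in> sl2. lie_bracket y x = smul t y}"
proof (rule set_eqI, rule iffI)
  fix y assume "y \<in> root_space (sp x) (fn x t)"
  then show "y \<in> {y \<in> sl2. lie_bracket y x = smul t y}"
    using sp_self[of x] fn_x[OF assms] unfolding root_space_def by auto
next
  fix y assume y: "y \<in> {y \<in> sl2. lie_bracket y x = smul t y}"
  show "y \<in> root_space (sp x) (fn x t)" unfolding root_space_def
  proof (intro CollectI conjI ballI)
    show "y \<in> sl2" using y by simp
    fix h assume "h \<in> sp x"
    then obtain a where "h = smul a x" unfolding sp_def by auto
    then show "lie_bracket y h = smul (fn x t h) y"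
      using y assms by (simp add: fn_smul lb_smul_r mult.commute)
  qed
qed

lemma lspan_0: "lspan {0::'a::field mat2} = {0}"
  by (rule lspan_sub) (simp add: lin_subspace_def)

lemma lb_sp: assumes "lie_bracket e f = smul m x" "m \<noteq> 0"
  shows "{lie_bracket p q | p q. p \<in> sp e \<and> q \<in> sp f} = sp x"
proof (rule set_eqI, rule iffI)
  fix z assume "z \<in> {lie_bracket p q | p q. p \<in> sp e \<and> q \<in> sp f}"
  then obtain b c where "z = lie_bracket (smul b e) (smul c f)" unfolding sp_def by auto
  then have "z = smul (b*c*m) x" using assms by (simp add: lb_smul_l lb_smul_r mult.commute mult.left_commute)
  then show "z \<in> sp x" by (simp add: sp_smul)
next
  fix z assume "z \<in> sp x"
  then obtain d where d: "z = smul d x" unfolding sp_def by auto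
  have "z = lie_bracket (smul (d/m) e) (smul 1 f)"
    using assms d by (simp add: lb_smul_l lb_smul_r)
  then show "z \<in> {lie_bracket p q | p q. p \<in> sp e \<and> q \<in> sp f}" using sp_smul by blast
qed

locale tri =
  fixes x e f :: "'a::{finite,field} mat2" and l m :: 'a
  assumes ch: "CHAR('a) > 3"
  and slx: "x \<in> sl2" and sle: "e \<in> sl2" and slf: "f \<in> sl2"
  and be: "lie_bracket e x = smul l e" and bf: "lie_bracket f x = smul (-l) f"
  and bef: "lie_bracket e f = smul m x"
  and lnz: "l \<noteq> 0" and mnz: "m \<noteq> 0"
  and span: "\<forall>y\<in>sl2. \<exists>a b c. y = smul a x + smul b e + smul c f"
  and indep: "\<forall>a b c. smul a x + smul b e + smul c f = 0 \<longrightarrow> a = 0 \<and> b = 0 \<and> c = 0"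
begin

lemma two: "(2::'a) \<noteq> 0" using char_nz[OF ch] by simp

lemma uniq: assumes "smul a x + smul b e + smul c f = smul a' x + smul b' e + smul c' f"
  shows "a = a' \<and> b = b' \<and> c = c'"
proof -
  have "smul (a-a') x + smul (b-b') e + smul (c-c') f
     = (smul a x + smul b e + smul c f) - (smul a' x + smul b' e + smul c' f)"
    by (simp add: M algebra_simps)
  then have "smul (a-a') x + smul (b-b') e + smul (c-c') f = 0" using assms by simp
  then show ?thesis using indep[rule_format, of "a-a'" "b-b'" "c-c'"] by simp
qed

lemma xnz: "x \<noteq> 0" using indep[rule_format, of 1 0 0] by auto
lemma enz: "e \<noteq> 0" using indep[rule_format, of 0 1 0] by auto
lemma fnz: "f \<noteq> 0" using indep[rule_format, of 0 0 1] by auto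

lemma brx: "lie_bracket (smul a x + smul b e + smul c f) x = smul 0 x + smul (b*l) e + smul (-(c*l)) f"
  using be bf by (simp add: lb_add_l lb_smul_l)

lemma smul3: "smul t (smul a x + smul b e + smul c f) = smul (t*a) x + smul (t*b) e + smul (t*c) f"
  by (simp add: smul_add)

lemma cond: "lie_bracket (smul a x + smul b e + smul c f) x = smul t (smul a x + smul b e + smul c f)
   \<longleftrightarrow> 0 = t*a \<and> b*l = t*b \<and> -(c*l) = t*c"
  unfolding brx smul3
proof
  assume "smul 0 x + smul (b * l) e + smul (- (c * l)) f = smul (t * a) x + smul (t * b) e + smul (t * c) f"
  then show "0 = t*a \<and> b*l = t*b \<and> -(c*l) = t*c" by (rule uniq)
next
  assume "0 = t*a \<and> b*l = t*b \<and> -(c*l) = t*c"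
  then have h1: "t*a = 0" and h2: "t*b = b*l" and h3: "t*c = -(c*l)" by auto
  show "smul 0 x + smul (b * l) e + smul (- (c * l)) f = smul (t * a) x + smul (t * b) e + smul (t * c) f"
    unfolding h1 h2 h3 ..
qed

definition "Rs t = {y \<in> sl2. lie_bracket y x = smul t y}"

lemma sl3: "smul a x + smul b e + smul c f \<in> sl2"
  using slx sle slf by (intro sl2_add sl2_smul)

lemma Rs_char: "y \<in> Rs t \<longleftrightarrow> (\<exists>a b c. y = smul a x + smul b e + smul c f \<and> 0 = t*a \<and> b*l = t*b \<and> -(c*l) = t*c)"
proof
  assume "y \<in> Rs t"
  then have "y \<in> sl2" "lie_bracket y x = smul t y" unfolding Rs_def by auto
  moreover obtain a b c where "y = smul a x + smul b e + smul c f" using span \<open>y \<in> sl2\<close> by blast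
  ultimately show "\<exists>a b c. y = smul a x + smul b e + smul c f \<and> 0 = t*a \<and> b*l = t*b \<and> -(c*l) = t*c"
    using cond by blast
next
  assume "\<exists>a b c. y = smul a x + smul b e + smul c f \<and> 0 = t*a \<and> b*l = t*b \<and> -(c*l) = t*c"
  then show "y \<in> Rs t" unfolding Rs_def using cond sl3 by blast
qed

lemma Rs0: "Rs 0 = sp x"
proof (rule set_eqI)
  fix y
  have "y \<in> Rs 0 \<longleftrightarrow> (\<exists>a. y = smul a x)"
    unfolding Rs_char using lnz by (auto simp: mult_eq_0_iff)
  then show "y \<in> Rs 0 \<longleftrightarrow> y \<in> sp x" unfolding sp_def by auto
qed

lemma Rsl: "Rs l = sp e"
proof (rule set_eqI)
  fix y
  have "y \<in> Rs l \<longleftrightarrow> (\<exists>b. y = smul b e)"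
  proof
    assume "y \<in> Rs l"
    then obtain a b c where y: "y = smul a x + smul b e + smul c f" "0 = l*a" "-(c*l) = l*c"
      unfolding Rs_char by blast
    then have "a = 0" using lnz by simp
    moreover have "c = 0"
    proof -
      have "(2*l) * c = 0" using y(3) by (simp add: algebra_simps)
      then show ?thesis using two lnz by simp
    qed
    ultimately show "\<exists>b. y = smul b e" using y(1) by (intro exI[of _ b]) simp
  next
    assume "\<exists>b. y = smul b e"
    then obtain b where "y = smul b e" by blast
    then have yy: "y = smul 0 x + smul b e + smul 0 f" by simp
    show "y \<in> Rs l" unfolding Rs_char
      by (rule exI[of _ 0], rule exI[of _ b], rule exI[of _ 0]) (simp add: yy mult.commute)
  qed
  then show "y \<in> Rs l \<longleftrightarrow> y \<in> sp e" unfolding sp_def by auto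
qed

lemma Rsml: "Rs (-l) = sp f"
proof (rule set_eqI)
  fix y
  have "y \<in> Rs (-l) \<longleftrightarrow> (\<exists>c. y = smul c f)"
  proof
    assume "y \<in> Rs (-l)"
    then obtain a b c where y: "y = smul a x + smul b e + smul c f" "0 = -l*a" "b*l = -l*b"
      unfolding Rs_char by blast
    then have "a = 0" using lnz by simp
    moreover have "b = 0"
    proof -
      have "(2*l) * b = 0" using y(3) by (simp add: algebra_simps)
      then show ?thesis using two lnz by simp
    qed
    ultimately show "\<exists>c. y = smul c f" using y(1) by (intro exI[of _ c]) simp
  next
    assume "\<exists>c. y = smul c f"
    then obtain c where "y = smul c f" by blast
    then have yy: "y = smul 0 x + smul 0 e + smul c f" by simp
    show "y \<in> Rs (-l)" unfolding Rs_char
      by (rule exI[of _ 0], rule exI[of _ 0], rule exI[of _ c]) (simp add: yy mult.commute)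
  qed
  then show "y \<in> Rs (-l) \<longleftrightarrow> y \<in> sp f" unfolding sp_def by auto
qed

lemma Rs_other: assumes "t \<noteq> 0" "t \<noteq> l" "t \<noteq> -l" shows "Rs t = {0}"
proof
  show "Rs t \<subseteq> {0}"
  proof
    fix y assume "y \<in> Rs t"
    then obtain a b c where y: "y = smul a x + smul b e + smul c f" "0 = t*a" "b*l = t*b" "-(c*l) = t*c"
      unfolding Rs_char by blast
    have "a = 0" using y(2) assms by simp
    moreover have "b = 0" using y(3) assms(2) by (metis mult.commute mult_right_cancel)
    moreover have "c = 0"
    proof -
      have "c*l + t*c = 0" using y(4) neg_eq_iff_add_eq_0 by blast
      then have "c * (t + l) = 0" by (simp add: algebra_simps)
      moreover have "t + l \<noteq> 0" using assms(3) eq_neg_iff_add_eq_0 by blast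
      ultimately show ?thesis by simp
    qed
    ultimately show "y \<in> {0}" using y(1) by simp
  qed
  show "{0} \<subseteq> Rs t" unfolding Rs_def using sl2_0 by simp
qed

lemma rs_eq: "root_space (sp x) (fn x t) = Rs t" using rs_fn[OF xnz] unfolding Rs_def by simp

lemma sp_ne0: "z \<noteq> 0 \<Longrightarrow> sp z \<noteq> {0}" using sp_self[of z] by auto

lemma roots_eq: "roots (sp x) = {fn x 0, fn x l, fn x (-l)}"
proof (rule set_eqI, rule iffI)
  fix \<alpha> assume "\<alpha> \<in> roots (sp x)"
  then have fa: "functional_on (sp x) \<alpha>" and r: "root_space (sp x) \<alpha> \<noteq> {0}" unfolding roots_def by auto
  have a: "\<alpha> = fn x (\<alpha> x)" using functional_fn[OF xnz fa] .
  then have "Rs (\<alpha> x) \<noteq> {0}" using r rs_eq by metis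
  then have "\<alpha> x = 0 \<or> \<alpha> x = l \<or> \<alpha> x = -l" using Rs_other by blast
  then show "\<alpha> \<in> {fn x 0, fn x l, fn x (-l)}" using a by auto
next
  fix \<alpha> assume a: "\<alpha> \<in> {fn x 0, fn x l, fn x (-l)}"
  have h: "Rs t \<noteq> {0} \<Longrightarrow> fn x t \<in> roots (sp x)" for t
    by (simp add: roots_def fn_functional xnz rs_eq)
  have "Rs 0 \<noteq> {0}" "Rs l \<noteq> {0}" "Rs (-l) \<noteq> {0}"
    unfolding Rs0 Rsl Rsml using sp_ne0 xnz enz fnz by auto
  then show "\<alpha> \<in> roots (sp x)" using a h by auto
qed

lemma roots_iff: "fn x t \<in> roots (sp x) \<longleftrightarrow> t = 0 \<or> t = l \<or> t = -l"
  unfolding roots_eq using fn_inj[OF xnz] by auto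

lemma dist: "fn x 0 \<noteq> fn x l" "fn x 0 \<noteq> fn x (-l)" "fn x l \<noteq> fn x (-l)"
proof -
  have "l \<noteq> -l"
  proof
    assume "l = -l"
    then have "2*l = 0" by (metis add.right_inverse mult_2)
    then show False using two lnz by simp
  qed
  then show "fn x 0 \<noteq> fn x l" "fn x 0 \<noteq> fn x (-l)" "fn x l \<noteq> fn x (-l)"
    using lnz fn_inj[OF xnz, of 0 l] fn_inj[OF xnz, of 0 "-l"] fn_inj[OF xnz, of l "-l"] by auto
qed

lemma part_a: "\<forall>y\<in>sl2. \<exists>!F. (\<forall>\<alpha>. \<alpha> \<notin> roots (sp x) \<longrightarrow> F \<alpha> = 0)
          \<and> (\<forall>\<alpha>\<in>roots (sp x). F \<alpha> \<in> root_space (sp x) \<alpha>) \<and> y = (\<Sum>\<alpha>\<in>roots (sp x). F \<alpha>)"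
proof
  fix y :: "'a mat2" assume "y \<in> sl2"
  then obtain a b c where y: "y = smul a x + smul b e + smul c f" using span by blast
  define F where "F = (\<lambda>\<alpha>. if \<alpha> = fn x 0 then smul a x else if \<alpha> = fn x l then smul b e
      else if \<alpha> = fn x (-l) then smul c f else 0)"
  note d = dist
  have sumF: "\<And>G. (\<Sum>\<alpha>\<in>roots (sp x). G \<alpha>) = G (fn x 0) + G (fn x l) + G (fn x (-l))"
    unfolding roots_eq using d by (simp add: add.assoc)
  show "\<exists>!F. (\<forall>\<alpha>. \<alpha> \<notin> roots (sp x) \<longrightarrow> F \<alpha> = 0)
          \<and> (\<forall>\<alpha>\<in>roots (sp x). F \<alpha> \<in> root_space (sp x) \<alpha>) \<and> y = (\<Sum>\<alpha>\<in>roots (sp x). F \<alpha>)"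
  proof (rule ex1I[of _ F], intro conjI)
    show "\<forall>\<alpha>. \<alpha> \<notin> roots (sp x) \<longrightarrow> F \<alpha> = 0" unfolding F_def roots_eq by auto
    show "\<forall>\<alpha>\<in>roots (sp x). F \<alpha> \<in> root_space (sp x) \<alpha>"
      unfolding roots_eq using d by (auto simp: F_def rs_eq Rs0 Rsl Rsml sp_smul)
    show "y = (\<Sum>\<alpha>\<in>roots (sp x). F \<alpha>)" unfolding sumF using d y by (simp add: F_def)
  next
    fix G assume G: "(\<forall>\<alpha>. \<alpha> \<notin> roots (sp x) \<longrightarrow> G \<alpha> = 0)
          \<and> (\<forall>\<alpha>\<in>roots (sp x). G \<alpha> \<in> root_space (sp x) \<alpha>) \<and> y = (\<Sum>\<alpha>\<in>roots (sp x). G \<alpha>)"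
    have "G (fn x 0) \<in> sp x" "G (fn x l) \<in> sp e" "G (fn x (-l)) \<in> sp f"
      using G unfolding roots_eq by (auto simp: rs_eq Rs0 Rsl Rsml)
    then obtain a' b' c' where g: "G (fn x 0) = smul a' x" "G (fn x l) = smul b' e" "G (fn x (-l)) = smul c' f"
      unfolding sp_def by blast
    have "smul a x + smul b e + smul c f = smul a' x + smul b' e + smul c' f"
      using G y g unfolding sumF by simp
    then have "a = a' \<and> b = b' \<and> c = c'" by (rule uniq)
    show "G = F"
    proof
      fix \<alpha> show "G \<alpha> = F \<alpha>"
        using G g \<open>a = a' \<and> b = b' \<and> c = c'\<close> d unfolding F_def roots_eq by auto
    qed
  qed
qed

lemma part_b: "\<forall>\<alpha>\<in>roots (sp x). \<alpha> \<noteq> (\<lambda>_. 0) \<longrightarrow>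
        one_dimensional (lspan {lie_bracket p q | p q. p \<in> root_space (sp x) \<alpha>
                                  \<and> q \<in> root_space (sp x) (\<lambda>h. - \<alpha> h)})"
proof (intro ballI impI)
  fix \<alpha> assume a: "\<alpha> \<in> roots (sp x)" "\<alpha> \<noteq> (\<lambda>_. 0)"
  have od: "one_dimensional (sp x)" unfolding one_dimensional_def sp_def using xnz by auto
  have fe: "lie_bracket f e = smul (-m) x" using bef lb_anti[of f e] by (simp add: smul_minus)
  have "\<alpha> = fn x l \<or> \<alpha> = fn x (-l)" using a unfolding roots_eq fn_zero by auto
  then show "one_dimensional (lspan {lie_bracket p q | p q. p \<in> root_space (sp x) \<alpha>
                                  \<and> q \<in> root_space (sp x) (\<lambda>h. - \<alpha> h)})"
  proof
    assume al: "\<alpha> = fn x l"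
    have na: "(\<lambda>h. - \<alpha> h) = fn x (-l)" unfolding al fn_neg ..
    show ?thesis unfolding al fn_neg rs_eq Rsl Rsml lb_sp[OF bef mnz] lspan_sub[OF sp_lin] using od by simp
  next
    assume al: "\<alpha> = fn x (-l)"
    have na: "(\<lambda>h. - \<alpha> h) = fn x l" unfolding al fn_neg by simp
    have mm: "- m \<noteq> 0" using mnz by simp
    show ?thesis unfolding al fn_neg minus_minus rs_eq Rsl Rsml lb_sp[OF fe mm] lspan_sub[OF sp_lin]
      using od by simp
  qed
qed

lemma part_c: "\<forall>\<alpha>\<in>roots (sp x). \<forall>\<beta>\<in>roots (sp x). \<beta> \<noteq> (\<lambda>_. 0) \<longrightarrow>
        (\<exists>k\<in>{1..CHAR('a) - 1}. (\<lambda>h. \<alpha> h + of_nat k * \<beta> h) \<notin> roots (sp x))"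
proof (intro ballI impI)
  fix \<alpha> \<beta> assume a: "\<alpha> \<in> roots (sp x)" and b: "\<beta> \<in> roots (sp x)" "\<beta> \<noteq> (\<lambda>_. 0)"
  obtain a0 where a0: "\<alpha> = fn x a0" "a0 = 0 \<or> a0 = l \<or> a0 = -l" using a unfolding roots_eq by auto
  obtain b0 where b0: "\<beta> = fn x b0" "b0 = l \<or> b0 = -l" using b unfolding roots_eq fn_zero by auto
  have "\<exists>k\<in>{1..CHAR('a) - 1}. a0 + of_nat k * b0 = 2 * b0"
  proof -
    have k: "1 \<in> {1..CHAR('a) - 1}" "2 \<in> {1..CHAR('a) - 1}" "3 \<in> {1..CHAR('a) - 1}" using ch by auto
    have "a0 = 0 \<or> a0 = b0 \<or> a0 = - b0" using a0(2) b0(2) by auto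
    then show ?thesis
    proof (elim disjE)
      assume h: "a0 = 0"
      have "a0 + of_nat 2 * b0 = 2 * b0" unfolding h by simp
      then show ?thesis using k(2) by blast
    next
      assume h: "a0 = b0"
      have "a0 + of_nat 1 * b0 = 2 * b0" unfolding h using mult_2[of b0] by simp
      then show ?thesis using k(1) by blast
    next
      assume h: "a0 = - b0"
      have "(3::'a)*b0 = (2+1)*b0" by simp
      also have "\<dots> = 2*b0 + b0" by (simp only: distrib_right mult_1)
      finally have "a0 + of_nat 3 * b0 = 2 * b0" unfolding h by simp
      then show ?thesis using k(3) by blast
    qed
  qed
  then obtain k where k: "k \<in> {1..CHAR('a) - 1}" "a0 + of_nat k * b0 = 2 * b0" by blast
  have t3: "(3::'a) \<noteq> 0" using char_nz[OF ch] by simp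
  have gen: "2 * v \<noteq> 0 \<and> 2 * v \<noteq> v \<and> 2 * v \<noteq> -v" if v: "v \<noteq> 0" for v :: 'a
  proof (intro conjI)
    show "2 * v \<noteq> 0" using v two by simp
    show "2 * v \<noteq> v"
    proof
      assume "2 * v = v" then have "v + v = v" by (simp only: mult_2)
      then have "v = 0" by (metis add_diff_cancel_right' diff_self)
      then show False using v by simp
    qed
    show "2 * v \<noteq> -v"
    proof
      assume h: "2 * v = -v"
      have "(3::'a) * v = (2+1) * v" by simp
      also have "\<dots> = 2 * v + v" by (simp only: distrib_right mult_1)
      also have "\<dots> = 0" using h by simp
      finally show False using v t3 by simp
    qed
  qed
  have b0nz: "b0 \<noteq> 0" using b0(2) lnz by auto
  have "2 * b0 \<noteq> 0" "2 * b0 \<noteq> l" "2 * b0 \<noteq> - l"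
    using gen[OF b0nz] b0(2) by auto
  then have "fn x (2*b0) \<notin> roots (sp x)" unfolding roots_iff by auto
  moreover have "(\<lambda>h. \<alpha> h + of_nat k * \<beta> h) = fn x (2*b0)" unfolding a0(1) b0(1) fn_comb k(2) ..
  ultimately show "\<exists>k\<in>{1..CHAR('a) - 1}. (\<lambda>h. \<alpha> h + of_nat k * \<beta> h) \<notin> roots (sp x)" using k(1) by (intro bexI[of _ k]) simp_all
qed

lemma comm: "\<forall>p\<in>sp x. \<forall>q\<in>sp x. lie_bracket p q = 0" by (auto simp: sp_def lb_smul_l lb_smul_r)

lemma cartan_sp: "cartan (sp x)"
  unfolding cartan_def
proof (intro conjI)
  show "subalgebra (sp x)" unfolding subalgebra_def
    using sp_lin sp_sub[OF slx] comm sp_0 by auto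
  have "{lie_bracket p q | p q. p \<in> sp x \<and> q \<in> lcs (sp x) 0} = {0}"
  proof
    show "{lie_bracket p q | p q. p \<in> sp x \<and> q \<in> lcs (sp x) 0} \<subseteq> {0}" using comm by auto
    show "{0} \<subseteq> {lie_bracket p q | p q. p \<in> sp x \<and> q \<in> lcs (sp x) 0}" using sp_0[of x] by force
  qed
  then have "lcs (sp x) 1 = {0}" using lspan_0 by simp
  then show "nilpotent_alg (sp x)" unfolding nilpotent_alg_def by blast
  show "normalizer (sp x) = sp x"
  proof
    show "normalizer (sp x) \<subseteq> sp x"
    proof
      fix y assume "y \<in> normalizer (sp x)"
      then have ysl: "y \<in> sl2" and "lie_bracket y x \<in> sp x" using sp_self[of x] unfolding normalizer_def by auto
      then obtain d where d: "lie_bracket y x = smul d x" unfolding sp_def by auto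
      obtain a b c where y: "y = smul a x + smul b e + smul c f" using span ysl by blast
      have "smul 0 x + smul (b*l) e + smul (-(c*l)) f = smul d x + smul 0 e + smul 0 f"
        using d brx y by simp
      from uniq[OF this] have "b*l = 0" "c*l = 0" by auto
      then have "y = smul a x" using y lnz by simp
      then show "y \<in> sp x" by (simp add: sp_smul)
    qed
    show "sp x \<subseteq> normalizer (sp x)"
      unfolding normalizer_def using sp_sub[OF slx] comm sp_0 by auto
  qed
qed

lemma cc: "classical_cartan (sp x)"
  unfolding classical_cartan_def
  using cartan_sp part_a part_b part_c by (auto simp: abelian_def sp_def lb_smul_l lb_smul_r)

end

lemma fermat: fixes x :: "'a::{finite,field}" assumes "x \<noteq> 0"
  shows "x ^ (CARD('a) - 1) = 1"
proof -
  let ?U = "UNIV - {0::'a}"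
  have inj: "inj_on (\<lambda>y. x*y) ?U" using assms by (auto simp: inj_on_def)
  have img: "(\<lambda>y. x*y) ` ?U = ?U"
  proof
    show "(\<lambda>y. x*y) ` ?U \<subseteq> ?U" using assms by auto
    show "?U \<subseteq> (\<lambda>y. x*y) ` ?U"
    proof
      fix z assume "z \<in> ?U"
      then have "z = x * (z/x)" "z/x \<in> ?U" using assms by auto
      then show "z \<in> (\<lambda>y. x*y) ` ?U" by blast
    qed
  qed
  have "prod id ?U = prod id ((\<lambda>y. x*y) ` ?U)" using img by simp
  also have "\<dots> = prod (\<lambda>y. x*y) ?U" using prod.reindex[OF inj, of id] by simp
  also have "\<dots> = x ^ card ?U * prod id ?U" by (simp add: prod.distrib)
  finally have e: "prod id ?U = x ^ card ?U * prod id ?U" .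
  have "prod id ?U \<noteq> 0" by simp
  then have "x ^ card ?U = 1" using e by (metis mult_cancel_right2)
  moreover have "card ?U = CARD('a) - 1" by (simp add: card_Diff_singleton)
  ultimately show ?thesis by simp
qed

lemma m1_mod4: fixes t :: "'a::{finite,field}" assumes t: "t*t = -1" and two: "(2::'a) \<noteq> 0"
  shows "CARD('a) mod 4 = 1"
proof -
  define n where "n = CARD('a) - 1"
  have tnz: "t \<noteq> 0" using t by auto
  have tn: "t ^ n = 1" using fermat[OF tnz] n_def by simp
  have t4: "t ^ 4 = 1"
  proof -
    have "t ^ 4 = (t*t)*(t*t)" by (simp add: power_numeral_reduce)
    then show ?thesis using t by simp
  qed
  have "n = 4 * (n div 4) + n mod 4" by simp
  then have "t ^ n = (t^4)^(n div 4) * t ^ (n mod 4)" by (metis power_add power_mult)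
  then have r: "t ^ (n mod 4) = 1" using tn t4 by simp
  have m11: "(1::'a) \<noteq> -1"
  proof
    assume "(1::'a) = -1" then have "(1::'a) + 1 = 0" by (metis add.right_inverse)
    then show False using two by simp
  qed
  have "n mod 4 = 0"
  proof -
    have "n mod 4 < 4" by simp
    then have "n mod 4 = 0 \<or> n mod 4 = 1 \<or> n mod 4 = 2 \<or> n mod 4 = 3" by linarith
    moreover have "n mod 4 \<noteq> 1"
    proof
      assume "n mod 4 = 1" then have "t = 1" using r by simp
      then show False using t m11 by simp
    qed
    moreover have "n mod 4 \<noteq> 2"
    proof
      assume "n mod 4 = 2" then have "t*t = 1" using r by (simp add: power2_eq_square)
      then show False using t m11 by simp
    qed
    moreover have "n mod 4 \<noteq> 3"
    proof
      assume "n mod 4 = 3" then have "t*t*t = 1" using r by (simp add: power_numeral_reduce mult.assoc)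
      then have "-t = 1" using t by simp
      then have "t = -1" by (metis minus_minus)
      then have "t*t = 1" by simp
      then show False using t m11 by simp
    qed
    ultimately show ?thesis by blast
  qed
  moreover have "CARD('a) > 0" by simp
  ultimately show ?thesis unfolding n_def by presburger
qed

lemma mod4_sq: assumes c: "CARD('a::{finite,field}) mod 4 = 1" shows "\<exists>i::'a. i*i = -1"
proof -
  define q where "q = CARD('a)"
  have q2: "q \<ge> 2"
  proof -
    have "card {0::'a, 1} = 2" by simp
    moreover have "card {0::'a, 1} \<le> q" unfolding q_def by (rule card_mono) auto
    ultimately show ?thesis by simp
  qed
  have cq: "q mod 4 = 1" using c q_def by simp
  define k where "k = (q - 1) div 4"
  have "(q - 1) mod 4 = 0" using cq q2 by presburger
  then have k1: "q - 1 = 4 * k" unfolding k_def by presburger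
  have "k \<ge> 1" using k1 q2 by presburger
  note k = k1 this
  define m where "m = 2 * k"
  define p :: "'a poly" where "p = monom 1 m - 1"
  have pp: "poly p x = x ^ m - 1" for x unfolding p_def by (simp add: poly_monom)
  have m1: "m \<ge> 1" using k m_def by simp
  have pnz: "p \<noteq> 0"
  proof
    assume "p = 0" then have "poly p 0 = 0" by simp
    then show False using pp[of 0] m1 by (simp add: power_0_left)
  qed
  have degp: "degree p \<le> m" unfolding p_def by (intro degree_diff_le degree_monom_le) simp
  have "card {x. poly p x = 0} \<le> m" using card_poly_roots_bound[OF pnz] degp by simp
  moreover have "m < card (UNIV - {0::'a})" using k m_def q_def by (simp add: card_Diff_singleton)
  ultimately have "\<not> (UNIV - {0::'a}) \<subseteq> {x. poly p x = 0}"
    by (metis card_mono finite_code not_le order_le_less_trans)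
  then obtain a :: 'a where a: "a \<noteq> 0" "a ^ m \<noteq> 1" using pp by auto
  have "a ^ (2*m) = 1" using fermat[OF a(1)] k m_def q_def by (simp add: mult.assoc)
  then have "(a^m - 1) * (a^m + 1) = 0" by (simp add: algebra_simps power_mult power2_eq_square[symmetric])
  then have am: "a ^ m = -1" using a(2) by (simp add: eq_neg_iff_add_eq_0)
  have "a^k * a^k = -1" using am m_def by (simp add: power_add[symmetric] mult_2)
  then show ?thesis by blast
qed

lemma mul_neg_l: "(- A) ** (B::'a::field mat2) = - (A ** B)" by (simp add: M)
lemma mul_neg_r: "A ** (- B) = - (A ** (B::'a::field mat2))" by (simp add: M)
lemma mul_sub_l: "A ** (B - C) = A ** B - A ** (C::'a::field mat2)" by (simp add: M algebra_simps)
lemma mul_sub_r: "(B - C) ** A = B ** A - C ** (A::'a::field mat2)" by (simp add: M algebra_simps)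
lemma mul_add_l: "A ** (B + C) = A ** B + A ** (C::'a::field mat2)" by (simp add: M algebra_simps)
lemma mul_add_r: "(B + C) ** A = B ** A + C ** (A::'a::field mat2)" by (simp add: M algebra_simps)
lemma trace_smul_one: "trace (smul c (mat 1 :: 'a::field mat2)) = 2 * c" by (simp add: M)
lemma smul_one_eq: "smul c (mat 1 :: 'a::field mat2) = smul d (mat 1) \<Longrightarrow> c = d"
  by (simp add: M)

lemma cod_frame:
  fixes H :: "nat \<Rightarrow> 'a::{finite,field} mat2 set"
  assumes ch: "CHAR('a) > 3" and H: "is_COD H"
  shows "\<exists>u v t. u \<in> sl2 \<and> v \<in> sl2 \<and> u ** u = mat 1 \<and> v ** v = mat 1 \<and> u ** v = - (v ** u)
     \<and> H 0 = sp u \<and> H 1 = sp v \<and> H 2 = sp (u ** v) \<and> t * t = (-1::'a)"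
proof -
  have four: "(4::'a) \<noteq> 0" and two: "(2::'a) \<noteq> 0" using char_nz[OF ch] by auto
  have cc: "\<And>i. i \<le> 2 \<Longrightarrow> classical_cartan (H i)" using H unfolding is_COD_def by auto
  have orth: "\<And>i j x y. i \<le> 2 \<Longrightarrow> j \<le> 2 \<Longrightarrow> i \<noteq> j \<Longrightarrow> x \<in> H i \<Longrightarrow> y \<in> H j \<Longrightarrow> trace (x ** y) = 0"
    using H four unfolding is_COD_def killing_eq by fastforce
  have nrm: "\<exists>y. y \<in> sl2 \<and> y \<noteq> 0 \<and> H i = sp y \<and> y ** y = mat 1" if i2: "i \<le> 2" for i
  proof -
    obtain x r where xr: "x \<in> sl2" "x \<noteq> 0" "r \<noteq> 0" "H i = sp x" "x ** x = smul (r*r) (mat 1)"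
      using cc_char[OF ch cc[OF i2]] by blast
    define y where "y = smul (1/r) x"
    have "y ** y = mat 1" using xr unfolding y_def by (simp add: mul_smul_l mul_smul_r)
    moreover have "y \<in> sl2" using xr unfolding y_def by (simp add: sl2_smul)
    moreover have "y \<noteq> 0" using xr unfolding y_def by (simp add: smul_eq_0)
    moreover have "H i = sp y" using xr unfolding y_def by (simp add: sp_eq)
    ultimately show ?thesis by blast
  qed
  obtain y0 where y0: "y0 \<in> sl2" "y0 \<noteq> 0" "H 0 = sp y0" "y0 ** y0 = mat 1" using nrm[of 0] by auto
  obtain y1 where y1: "y1 \<in> sl2" "y1 \<noteq> 0" "H 1 = sp y1" "y1 ** y1 = mat 1" using nrm[of 1] by auto
  obtain y2 where y2: "y2 \<in> sl2" "y2 \<noteq> 0" "H 2 = sp y2" "y2 ** y2 = mat 1" using nrm[of 2] by auto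
  have ac: "a ** b = - (b ** a)" if "a \<in> sl2" "b \<in> sl2" "trace (a ** b) = 0" for a b
  proof -
    have "a ** b + b ** a = 0" using anticomm[OF that(1,2)] that(3) by simp
    then show ?thesis by (simp add: eq_neg_iff_add_eq_0)
  qed
  have t01: "trace (y0 ** y1) = 0" by (rule orth[of 0 1]) (use y0 y1 sp_self in auto)
  have t02: "trace (y0 ** y2) = 0" by (rule orth[of 0 2]) (use y0 y2 sp_self in auto)
  have t12: "trace (y1 ** y2) = 0" by (rule orth[of 1 2]) (use y1 y2 sp_self in auto)
  have a01: "y0 ** y1 = - (y1 ** y0)" by (rule ac[OF y0(1) y1(1) t01])
  have a02: "y0 ** y2 = - (y2 ** y0)" by (rule ac[OF y0(1) y2(1) t02])
  have a12: "y1 ** y2 = - (y2 ** y1)" by (rule ac[OF y1(1) y2(1) t12])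
  define z where "z = y0 ** y1"
  have zsl: "z \<in> sl2" using t01 unfolding z_def sl2_def by auto
  have "z ** y2 = y2 ** z"
  proof -
    have "z ** y2 = y0 ** (y1 ** y2)" unfolding z_def by (simp add: matrix_mul_assoc)
    also have "\<dots> = - ((y0 ** y2) ** y1)" using a12 by (simp add: mul_neg_r matrix_mul_assoc)
    also have "\<dots> = (y2 ** y0) ** y1" using a02 by (simp add: mul_neg_l)
    finally show ?thesis unfolding z_def by (simp add: matrix_mul_assoc)
  qed
  then have "lie_bracket z y2 = 0" by (simp add: lie_bracket_def)
  then obtain t where zt: "z = smul t y2" using centralizer[OF two y2(1) zsl y2(2)] by blast
  have zz: "z ** z = - mat 1"
  proof -
    have "z ** z = y0 ** ((y1 ** y0) ** y1)" unfolding z_def by (simp add: matrix_mul_assoc)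
    also have "\<dots> = - (y0 ** ((y0 ** y1) ** y1))" using a01 by (simp add: mul_neg_l mul_neg_r)
    also have "\<dots> = - mat 1" using y0 y1 by (simp add: matrix_mul_assoc[symmetric])
    finally show ?thesis .
  qed
  have "smul (t*t) (mat 1) = smul (-1) (mat 1 :: 'a mat2)"
    using zz zt y2(4) by (simp add: mul_smul_l mul_smul_r smul_minus[symmetric])
  then have tt: "t * t = -1" by (rule smul_one_eq)
  then have "t \<noteq> 0" by auto
  then have "H 2 = sp (y0 ** y1)" using y2(3) zt z_def sp_eq by metis
  then have H2: "H 2 = sp (y0 ** y1)" .
  show ?thesis
    apply (rule exI[of _ y0]) apply (rule exI[of _ y1]) apply (rule exI[of _ t])
    using y0 y1 a01 tt H2 by blast
qed

lemma cod_distinct: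
  fixes H :: "nat \<Rightarrow> 'a::{finite,field} mat2 set"
  assumes ch: "CHAR('a) > 3" and H: "is_COD H" and ij: "i \<le> 2" "j \<le> 2" "H i = H j"
  shows "i = j"
proof (rule ccontr)
  assume ne: "i \<noteq> j"
  have cc: "classical_cartan (H i)" using H ij unfolding is_COD_def by auto
  obtain x r where xr: "x \<in> sl2" "x \<noteq> 0" "r \<noteq> 0" "H i = sp x" "x ** x = smul (r*r) (mat 1)"
    using cc_char[OF ch cc] by blast
  have "killing x x = 0" using H ij ne xr(4) sp_self[of x] unfolding is_COD_def by metis
  moreover have "killing x x = 8 * (r*r)" using xr(5) by (simp add: killing_eq trace_smul_one)
  ultimately show False using char_nz(4)[OF ch] xr(3) by simp
qed

lemma conj_aut:
  fixes g gi :: "'a::field mat2"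
  assumes g1: "g ** gi = mat 1" and g2: "gi ** g = mat 1"
  shows "lie_automorphism (\<lambda>x. g ** x ** gi)"
proof -
  have tr: "trace (g ** x ** gi) = trace x" for x
  proof -
    have "trace (g ** x ** gi) = trace (gi ** (g ** x))" by (rule trace_mul_sym)
    also have "\<dots> = trace x" using g2 by (simp add: matrix_mul_assoc)
    finally show ?thesis .
  qed
  have tr2: "trace (gi ** x ** g) = trace x" for x
  proof -
    have "trace (gi ** x ** g) = trace (g ** (gi ** x))" by (rule trace_mul_sym)
    also have "\<dots> = trace x" using g1 by (simp add: matrix_mul_assoc)
    finally show ?thesis .
  qed
  have inv1: "gi ** (g ** x ** gi) ** g = x" for x
  proof -
    have "gi ** (g ** x ** gi) ** g = (gi ** g) ** x ** (gi ** g)" by (simp add: matrix_mul_assoc)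
    then show ?thesis using g2 by simp
  qed
  have inv2: "g ** (gi ** x ** g) ** gi = x" for x
  proof -
    have "g ** (gi ** x ** g) ** gi = (g ** gi) ** x ** (g ** gi)" by (simp add: matrix_mul_assoc)
    then show ?thesis using g1 by simp
  qed
  have mult: "(g ** x ** gi) ** (g ** y ** gi) = g ** (x ** y) ** gi" for x y
  proof -
    have "(g ** x ** gi) ** (g ** y ** gi) = g ** x ** (gi ** g) ** y ** gi" by (simp add: matrix_mul_assoc)
    then show ?thesis using g2 by (simp add: matrix_mul_assoc)
  qed
  show ?thesis unfolding lie_automorphism_def
  proof (intro conjI ballI allI)
    show "bij_betw (\<lambda>x. g ** x ** gi) sl2 sl2"
      by (rule bij_betw_byWitness[where f'="\<lambda>x. gi ** x ** g"])
         (use inv1 inv2 tr tr2 in \<open>auto simp: sl2_def\<close>)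
    fix x y :: "'a mat2"
    show "g ** (x + y) ** gi = g ** x ** gi + g ** y ** gi" by (simp add: mul_add_l mul_add_r)
    show "g ** lie_bracket x y ** gi = lie_bracket (g ** x ** gi) (g ** y ** gi)" if "x \<in> sl2" "y \<in> sl2"
      unfolding lie_bracket_def mult by (simp add: mul_sub_l mul_sub_r)
  next
    fix c and x :: "'a mat2"
    show "g ** smul c x ** gi = smul c (g ** x ** gi)" by (simp add: mul_smul_l mul_smul_r)
  qed
qed

lemma conj_sp: "(\<lambda>x. g ** x ** gi) ` sp z = sp (g ** z ** gi)"
proof
  show "(\<lambda>x. g ** x ** gi) ` sp z \<subseteq> sp (g ** z ** gi)"
    unfolding sp_def by (auto simp: mul_smul_l mul_smul_r)
  show "sp (g ** z ** gi) \<subseteq> (\<lambda>x. g ** x ** gi) ` sp z"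
  proof
    fix w assume "w \<in> sp (g ** z ** gi)"
    then obtain c where "w = smul c (g ** z ** gi)" unfolding sp_def by auto
    then have "w = g ** smul c z ** gi" by (simp add: mul_smul_l mul_smul_r)
    then show "w \<in> (\<lambda>x. g ** x ** gi) ` sp z" using sp_smul by blast
  qed
qed

definition U0 :: "'a::field mat2" where "U0 = (\<chi> i j. if i = j then (if i = 1 then 1 else -1) else 0)"
definition V0 :: "'a::field mat2" where "V0 = (\<chi> i j. if i = j then 0 else 1)"

lemma exists_P:
  fixes u v :: "'a::field mat2"
  assumes two: "(2::'a) \<noteq> 0" and u: "u \<in> sl2" "u ** u = mat 1" and v: "v ** v = mat 1"
    and uv: "u ** v = - (v ** u)"
  shows "\<exists>P Pi. P ** Pi = mat 1 \<and> Pi ** P = mat 1 \<and> u ** P = P ** U0 \<and> v ** P = P ** V0"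
proof -
  have u22: "u$2$2 = - u$1$1" using u(1) by (simp add: sl2_iff)
  have "smul (u$1$1*u$1$1 + u$1$2*u$2$1) (mat 1) = smul 1 (mat 1 :: 'a mat2)" using sq_sl2[OF u(1)] u(2) by simp
  then have a2: "u$1$1*u$1$1 + u$1$2*u$2$1 = 1" by (rule smul_one_eq)
  define e :: "'a^2" where "e = (\<chi> i. if u$1$1 = -1 then (if i = 1 then u$1$2 else 2) else (if i = 1 then u$1$1 + 1 else u$2$1))"
  have ue: "u *v e = e"
  proof (cases "u$1$1 = -1")
    case True
    then have "u$1$2 * u$2$1 = 0" using a2 by simp
    then show ?thesis using True u22 by (simp add: e_def vec_eq_iff forall_2 matrix_vector_mult_def sum_2 algebra_simps)
  next
    case False
    then show ?thesis using a2 u22 by (simp add: e_def vec_eq_iff forall_2 matrix_vector_mult_def sum_2 algebra_simps)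
  qed
  have enz: "e \<noteq> 0"
  proof (cases "u$1$1 = -1")
    case True then show ?thesis using two by (simp add: e_def vec_eq_iff forall_2)
  next
    case False then have "u$1$1 + 1 \<noteq> 0" using eq_neg_iff_add_eq_0 by blast
    then show ?thesis using False by (simp add: e_def vec_eq_iff forall_2)
  qed
  define f where "f = v *v e"
  have uf: "u *v f = - f"
  proof -
    have neg: "(- A) *v w = - (A *v w)" for A :: "'a mat2" and w
      by (simp add: vec_eq_iff matrix_vector_mult_def sum_negf)
    have "u *v f = (u ** v) *v e" unfolding f_def by (simp add: matrix_vector_mul_assoc)
    also have "\<dots> = - ((v ** u) *v e)" unfolding uv neg ..
    also have "\<dots> = - (v *v (u *v e))" by (simp add: matrix_vector_mul_assoc)
    finally show ?thesis using ue f_def by simp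
  qed
  have vf: "v *v f = e" unfolding f_def using v by (simp add: matrix_vector_mul_assoc)
  have ue1: "u$i$1 * e$1 + u$i$2 * e$2 = e$i" for i using ue by (simp add: vec_eq_iff matrix_vector_mult_def sum_2)
  define d where "d = e$1 * f$2 - e$2 * f$1"
  have dnz: "d \<noteq> 0"
  proof
    assume d0: "d = 0"
    obtain k where fk: "f = (\<chi> i. k * e$i)"
    proof (cases "e$1 = 0")
      case False
      show ?thesis
        by (rule that[of "f$1 / e$1"]) (use False d0 in \<open>simp add: vec_eq_iff forall_2 d_def field_simps\<close>)
    next
      case True
      then have "e$2 \<noteq> 0" using enz by (simp add: vec_eq_iff forall_2)
      then show ?thesis
        by (intro that[of "f$2 / e$2"]) (use True d0 in \<open>simp add: vec_eq_iff forall_2 d_def field_simps\<close>)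
    qed
    have c: "u$i$1 * (k*e$1) + u$i$2*(k*e$2) = k*e$i" for i
      using ue1[of i] by (metis distrib_left mult.left_commute)
    have "u *v f = f" unfolding fk by (simp add: vec_eq_iff matrix_vector_mult_def sum_2 c)
    then have ff: "f = - f" using uf by simp
    have "f$i = 0" for i
    proof -
      have "f$i = - f$i" using ff by (metis vector_uminus_component)
      then have "f$i + f$i = 0" using eq_neg_iff_add_eq_0 by blast
      then have "2 * f$i = 0" by (simp only: mult_2)
      then show ?thesis using two by simp
    qed
    then have "f = 0" by (simp add: vec_eq_iff)
    then have "e = 0" using vf by simp
    then show False using enz by simp
  qed
  have uf1: "u$i$1 * f$1 + u$i$2 * f$2 = - f$i" for i using uf by (simp add: vec_eq_iff matrix_vector_mult_def sum_2)
  have ve1: "v$i$1 * e$1 + v$i$2 * e$2 = f$i" for i using f_def by (simp add: vec_eq_iff matrix_vector_mult_def sum_2)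
  have vf1: "v$i$1 * f$1 + v$i$2 * f$2 = e$i" for i using vf by (simp add: vec_eq_iff matrix_vector_mult_def sum_2)
  define P :: "'a mat2" where "P = (\<chi> i j. if j = 1 then e$i else f$i)"
  define Pi :: "'a mat2" where "Pi = (\<chi> i j. (1/d) * (if i = 1 then (if j = 1 then f$2 else - f$1) else (if j = 1 then - e$2 else e$1)))"
  have "P ** Pi = mat 1" using dnz unfolding P_def Pi_def by (simp add: M field_simps) (simp add: d_def algebra_simps)
  moreover have "Pi ** P = mat 1" using dnz unfolding P_def Pi_def by (simp add: M field_simps) (simp add: d_def algebra_simps)
  moreover have "u ** P = P ** U0" unfolding P_def U0_def using ue1 uf1 by (simp add: M)
  moreover have "v ** P = P ** V0" unfolding P_def V0_def using ve1 vf1 by (simp add: M)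
  ultimately show ?thesis by blast
qed

definition mk2 :: "'a::field \<Rightarrow> 'a \<Rightarrow> 'a \<Rightarrow> 'a \<Rightarrow> 'a mat2" where
  "mk2 a b c d = (\<chi> r s. if r = 1 then (if s = 1 then a else b) else (if s = 1 then c else d))"

lemma mk2_nth[simp]: "mk2 a b c d $ 1 $ 1 = a" "mk2 a b c d $ 1 $ 2 = b" "mk2 a b c d $ 2 $ 1 = c" "mk2 a b c d $ 2 $ 2 = d"
  by (simp_all add: mk2_def)

lemma mk2_eq: "A = mk2 (A$1$1) (A$1$2) (A$2$1) (A$2$2)" by (simp add: M)

lemma trace_lin: "trace ((smul a x + smul b y + smul c z) ** w) = a * trace (x ** w) + b * trace (y ** w) + c * trace (z ** (w::'a::field mat2))"
  by (simp add: mul_add_r mul_smul_l trace_add trace_smul)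

lemma zmul: "(0::'a::field mat2) ** w = 0" "trace (0::'a::field mat2) = 0" by (simp_all add: M)

lemma indep_orth:
  fixes x y z :: "'a::field mat2"
  assumes "trace (x ** x) \<noteq> 0" "trace (y ** y) \<noteq> 0" "trace (z ** z) \<noteq> 0"
    "trace (x ** y) = 0" "trace (x ** z) = 0" "trace (y ** z) = 0"
  shows "\<forall>a b c. smul a x + smul b y + smul c z = 0 \<longrightarrow> a = 0 \<and> b = 0 \<and> c = 0"
proof (intro allI impI)
  fix a b c assume h: "smul a x + smul b y + smul c z = 0"
  have s: "trace (y ** x) = 0" "trace (z ** x) = 0" "trace (z ** y) = 0"
    using assms(4-6) trace_mul_sym by metis+
  have "a * trace (x ** x) = 0" using trace_lin[of a x b y c z x] h s by (simp add: M)
  moreover have "b * trace (y ** y) = 0" using trace_lin[of a x b y c z y] h s assms by (simp add: M)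
  moreover have "c * trace (z ** z) = 0" using trace_lin[of a x b y c z z] h s assms by (simp add: M)
  ultimately show "a = 0 \<and> b = 0 \<and> c = 0" using assms(1-3) by simp
qed

lemma indep_tri:
  fixes x e f :: "'a::field mat2"
  assumes "trace (x ** x) \<noteq> 0" "trace (e ** f) \<noteq> 0" "trace (e ** e) = 0" "trace (f ** f) = 0"
    "trace (x ** e) = 0" "trace (x ** f) = 0"
  shows "\<forall>a b c. smul a x + smul b e + smul c f = 0 \<longrightarrow> a = 0 \<and> b = 0 \<and> c = 0"
proof (intro allI impI)
  fix a b c assume h: "smul a x + smul b e + smul c f = 0"
  have s: "trace (e ** x) = 0" "trace (f ** x) = 0" "trace (f ** e) = trace (e ** f)"
    using assms(5,6) trace_mul_sym by metis+
  have "a * trace (x ** x) = 0" using trace_lin[of a x b e c f x] h s by (simp add: zmul)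
  moreover have "b * trace (e ** f) = 0" using trace_lin[of a x b e c f f] h s assms by (simp add: zmul)
  moreover have "c * trace (e ** f) = 0" using trace_lin[of a x b e c f e] h s assms by (simp add: zmul)
  ultimately show "a = 0 \<and> b = 0 \<and> c = 0" using assms(1,2) by simp
qed

context
  fixes i :: "'a::{finite,field}"
  assumes ch: "CHAR('a) > 3" and ii: "i * i = -1"
begin

lemma two': "(2::'a) \<noteq> 0" using char_nz[OF ch] by simp
lemma four': "(4::'a) \<noteq> 0" using char_nz[OF ch] by simp
lemma p2: "(2::'a) ^ k \<noteq> 0" using two' by simp
lemma sixteen': "(16::'a) \<noteq> 0" "(32::'a) \<noteq> 0" "(8::'a) \<noteq> 0" "(64::'a) \<noteq> 0"
  using p2[of 4] p2[of 5] p2[of 3] p2[of 6] by simp_all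
lemma ii2: "i * (i * z) = - z" using ii by (metis mult.assoc mult_minus1)
lemma inz: "i \<noteq> 0" using ii by auto

definition "Uc = mk2 (1::'a) 0 0 (-1)"
definition "Vc = mk2 (0::'a) 1 1 0"
definition "Wc = mk2 (0::'a) i (-i) 0"

lemma tri_U: "tri Uc (mk2 0 0 1 0) (mk2 0 1 0 0) 2 (-1)"
proof
  show "CHAR('a) > 3" by (rule ch)
  show "Uc \<in> sl2" "mk2 0 0 1 0 \<in> sl2" "mk2 0 1 0 0 \<in> sl2" by (simp_all add: Uc_def sl2_iff)
  show "lie_bracket (mk2 0 0 1 0) Uc = smul 2 (mk2 0 0 1 0)" by (simp add: Uc_def M)
  show "lie_bracket (mk2 0 1 0 0) Uc = smul (-2) (mk2 0 1 0 0)" by (simp add: Uc_def M)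
  show "lie_bracket (mk2 0 0 1 0) (mk2 0 1 0 0) = smul (-1) Uc" by (simp add: Uc_def M)
  show "(2::'a) \<noteq> 0" by (rule two')
  show "(-1::'a) \<noteq> 0" by simp
  show "\<forall>y\<in>sl2. \<exists>a b c. y = smul a Uc + smul b (mk2 0 0 1 0) + smul c (mk2 0 1 0 0)"
  proof
    fix y :: "'a mat2" assume "y \<in> sl2"
    then have "y = smul (y$1$1) Uc + smul (y$2$1) (mk2 0 0 1 0) + smul (y$1$2) (mk2 0 1 0 0)"
      by (simp add: Uc_def M sl2_iff)
    then show "\<exists>a b c. y = smul a Uc + smul b (mk2 0 0 1 0) + smul c (mk2 0 1 0 0)" by blast
  qed
  show "\<forall>a b c. smul a Uc + smul b (mk2 0 0 1 0) + smul c (mk2 0 1 0 0) = 0 \<longrightarrow> a = 0 \<and> b = 0 \<and> c = 0"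
    by (rule indep_tri) (simp_all add: Uc_def M two')
qed

lemma tri_V: "tri Vc (mk2 1 1 (-1) (-1)) (mk2 1 (-1) 1 (-1)) 2 (-4)"
proof
  show "CHAR('a) > 3" by (rule ch)
  show "Vc \<in> sl2" "mk2 1 1 (-1) (-1) \<in> sl2" "mk2 1 (-1) 1 (-1) \<in> sl2" by (simp_all add: Vc_def sl2_iff)
  show "lie_bracket (mk2 1 1 (-1) (-1)) Vc = smul 2 (mk2 1 1 (-1) (-1))" by (simp add: Vc_def M)
  show "lie_bracket (mk2 1 (-1) 1 (-1)) Vc = smul (-2) (mk2 1 (-1) 1 (-1))" by (simp add: Vc_def M)
  show "lie_bracket (mk2 1 1 (-1) (-1)) (mk2 1 (-1) 1 (-1)) = smul (-4) Vc" by (simp add: Vc_def M)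
  show "(2::'a) \<noteq> 0" by (rule two')
  show "(-4::'a) \<noteq> 0" using four' by simp
  show "\<forall>y\<in>sl2. \<exists>a b c. y = smul a Vc + smul b (mk2 1 1 (-1) (-1)) + smul c (mk2 1 (-1) 1 (-1))"
  proof
    fix y :: "'a mat2" assume "y \<in> sl2"
    then have "y = smul ((y$1$2 + y$2$1)/2) Vc + smul ((2*y$1$1 + y$1$2 - y$2$1)/4) (mk2 1 1 (-1) (-1))
                 + smul ((2*y$1$1 - y$1$2 + y$2$1)/4) (mk2 1 (-1) 1 (-1))"
      using two' four' sixteen' by (simp add: Vc_def M sl2_iff field_simps)
    then show "\<exists>a b c. y = smul a Vc + smul b (mk2 1 1 (-1) (-1)) + smul c (mk2 1 (-1) 1 (-1))" by blast
  qed
  show "\<forall>a b c. smul a Vc + smul b (mk2 1 1 (-1) (-1)) + smul c (mk2 1 (-1) 1 (-1)) = 0 \<longrightarrow> a = 0 \<and> b = 0 \<and> c = 0"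
    by (rule indep_tri) (simp_all add: Vc_def M two' four')
qed

lemma tri_W: "tri Wc (mk2 1 i i (-1)) (mk2 1 (-i) (-i) (-1)) 2 (-4)"
proof
  show "CHAR('a) > 3" by (rule ch)
  show "Wc \<in> sl2" "mk2 1 i i (-1) \<in> sl2" "mk2 1 (-i) (-i) (-1) \<in> sl2" by (simp_all add: Wc_def sl2_iff)
  show "lie_bracket (mk2 1 i i (-1)) Wc = smul 2 (mk2 1 i i (-1))" using ii by (simp add: Wc_def M)
  show "lie_bracket (mk2 1 (-i) (-i) (-1)) Wc = smul (-2) (mk2 1 (-i) (-i) (-1))" using ii by (simp add: Wc_def M)
  show "lie_bracket (mk2 1 i i (-1)) (mk2 1 (-i) (-i) (-1)) = smul (-4) Wc" using ii by (simp add: Wc_def M)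
  show "(2::'a) \<noteq> 0" by (rule two')
  show "(-4::'a) \<noteq> 0" using four' by simp
  show "\<forall>y\<in>sl2. \<exists>a b c. y = smul a Wc + smul b (mk2 1 i i (-1)) + smul c (mk2 1 (-i) (-i) (-1))"
  proof
    fix y :: "'a mat2" assume "y \<in> sl2"
    then have "y = smul (- i * (y$1$2 - y$2$1)/2) Wc + smul ((y$1$1 - i*(y$1$2 + y$2$1)/2)/2) (mk2 1 i i (-1))
                 + smul ((y$1$1 + i*(y$1$2 + y$2$1)/2)/2) (mk2 1 (-i) (-i) (-1))"
      using two' four' sixteen' ii by (simp add: Wc_def M sl2_iff field_simps) (simp add: algebra_simps ii2)
    then show "\<exists>a b c. y = smul a Wc + smul b (mk2 1 i i (-1)) + smul c (mk2 1 (-i) (-i) (-1))" by blast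
  qed
  show "\<forall>a b c. smul a Wc + smul b (mk2 1 i i (-1)) + smul c (mk2 1 (-i) (-i) (-1)) = 0 \<longrightarrow> a = 0 \<and> b = 0 \<and> c = 0"
    by (rule indep_tri) (use ii in \<open>simp_all add: Wc_def M two' four'\<close>)
qed

definition "Hc = (\<lambda>n::nat. if n = 0 then sp Uc else if n = 1 then sp Vc else sp Wc)"

lemma sum3: "(\<Sum>j\<le>(2::nat). h j) = h 0 + h 1 + (h 2 :: 'b::comm_monoid_add)"
  by (simp add: numeral_2_eq_2 atMost_Suc add_ac)

lemma kill_smul: "killing (smul a X) (smul b Y) = 4 * a * b * trace (X ** (Y::'b::field mat2))"
  by (simp add: killing_eq mul_smul_l mul_smul_r trace_smul)

lemma cod_exists: "is_COD Hc"
  unfolding is_COD_def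
proof (intro conjI allI impI ballI)
  fix n :: nat assume "n \<le> 2"
  then have "n = 0 \<or> n = 1 \<or> n = 2" by auto
  then show "classical_cartan (Hc n)"
    using tri.cc[OF tri_U] tri.cc[OF tri_V] tri.cc[OF tri_W] unfolding Hc_def by auto
next
  fix n n' :: nat and x y assume n: "n \<le> 2" "n' \<le> 2" "n \<noteq> n'" and xy: "x \<in> Hc n" "y \<in> Hc n'"
  have t: "trace (Uc ** Vc) = 0" "trace (Vc ** Uc) = 0" "trace (Uc ** Wc) = 0" "trace (Wc ** Uc) = 0"
    "trace (Vc ** Wc) = 0" "trace (Wc ** Vc) = 0" by (simp_all add: Uc_def Vc_def Wc_def M)
  have "n = 0 \<or> n = 1 \<or> n = 2" "n' = 0 \<or> n' = 1 \<or> n' = 2" using n by auto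
  then show "killing x y = 0" using n(3) xy t unfolding Hc_def sp_def by (auto simp: kill_smul)
next
  fix y :: "'a mat2" assume y: "y \<in> sl2"
  define \<alpha> where "\<alpha> = y$1$1"
  define \<beta> where "\<beta> = (y$1$2 + y$2$1)/2"
  define \<gamma> where "\<gamma> = - i * (y$1$2 - y$2$1)/2"
  have yd: "y = smul \<alpha> Uc + smul \<beta> Vc + smul \<gamma> Wc"
    unfolding \<alpha>_def \<beta>_def \<gamma>_def using y two' four' ii
    by (simp add: Uc_def Vc_def Wc_def M sl2_iff field_simps) (simp add: algebra_simps ii2)
  have ind: "\<forall>a b c. smul a Uc + smul b Vc + smul c Wc = 0 \<longrightarrow> a = 0 \<and> b = 0 \<and> c = 0"
    by (rule indep_orth) (use ii two' in \<open>simp_all add: Uc_def Vc_def Wc_def M\<close>)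
  define h where "h = (\<lambda>n::nat. if n = 0 then smul \<alpha> Uc else if n = 1 then smul \<beta> Vc else if n = 2 then smul \<gamma> Wc else 0)"
  show "\<exists>!h. (\<forall>i::nat\<le>2. h i \<in> Hc i) \<and> (\<forall>i::nat>2. h i = 0) \<and> y = (\<Sum>i\<le>2. h i)"
  proof (rule ex1I[of _ h], intro conjI allI impI)
    fix n :: nat assume "n \<le> 2"
    then have "n = 0 \<or> n = 1 \<or> n = 2" by auto
    then show "h n \<in> Hc n" unfolding h_def Hc_def using sp_smul by auto
  next
    fix n :: nat assume "n > 2" then show "h n = 0" unfolding h_def by auto
  next
    show "y = (\<Sum>i\<le>2. h i)" unfolding sum3 h_def using yd by simp
  next
    fix h' assume h': "(\<forall>i\<le>2. h' i \<in> Hc i) \<and> (\<forall>i>2. h' i = 0) \<and> y = (\<Sum>i\<le>2. h' i)"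
    have hh: "\<forall>i::nat\<le>2. h' i \<in> Hc i" using h' by blast
    have "h' 0 \<in> sp Uc" "h' 1 \<in> sp Vc" "h' 2 \<in> sp Wc"
      using hh[rule_format, of 0] hh[rule_format, of 1] hh[rule_format, of 2] unfolding Hc_def by simp_all
    then obtain a b c where abc: "h' 0 = smul a Uc" "h' 1 = smul b Vc" "h' 2 = smul c Wc" unfolding sp_def by blast
    have "smul (\<alpha> - a) Uc + smul (\<beta> - b) Vc + smul (\<gamma> - c) Wc
        = (smul \<alpha> Uc + smul \<beta> Vc + smul \<gamma> Wc) - (smul a Uc + smul b Vc + smul c Wc)"
      by (simp add: M algebra_simps)
    also have "\<dots> = 0" using h' abc yd unfolding sum3 by simp
    finally have "\<alpha> = a \<and> \<beta> = b \<and> \<gamma> = c" using ind by (metis right_minus_eq)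
    show "h' = h"
    proof
      fix n :: nat
      show "h' n = h n"
      proof (cases "n > 2")
        case True then show ?thesis using h' unfolding h_def by auto
      next
        case False then have "n = 0 \<or> n = 1 \<or> n = 2" by auto
        then show ?thesis using abc \<open>\<alpha> = a \<and> \<beta> = b \<and> \<gamma> = c\<close> unfolding h_def by auto
      qed
    qed
  qed
qed

end

lemma cod_unique:
  fixes H H' :: "nat \<Rightarrow> 'a::{finite,field} mat2 set"
  assumes ch: "CHAR('a) > 3" and H: "is_COD H" and H': "is_COD H'"
  shows "COD_conjugate H H'"
proof -
  have two: "(2::'a) \<noteq> 0" using char_nz[OF ch] by simp
  obtain u v t where fr: "u \<in> sl2" "v \<in> sl2" "u ** u = mat 1" "v ** v = mat 1" "u ** v = - (v ** u)"
     "H 0 = sp u" "H 1 = sp v" "H 2 = sp (u ** v)"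
    using cod_frame[OF ch H] by blast
  obtain u' v' t' where fr': "u' \<in> sl2" "v' \<in> sl2" "u' ** u' = mat 1" "v' ** v' = mat 1" "u' ** v' = - (v' ** u')"
     "H' 0 = sp u'" "H' 1 = sp v'" "H' 2 = sp (u' ** v')"
    using cod_frame[OF ch H'] by blast
  obtain P Pi where P: "P ** Pi = mat 1" "Pi ** P = mat 1" "u ** P = P ** U0" "v ** P = P ** V0"
    using exists_P[OF two fr(1,3,4,5)] by blast
  obtain Q Qi where Q: "Q ** Qi = mat 1" "Qi ** Q = mat 1" "u' ** Q = Q ** U0" "v' ** Q = Q ** V0"
    using exists_P[OF two fr'(1,3,4,5)] by blast
  define g where "g = Q ** Pi"
  define gi where "gi = P ** Qi"
  have "g ** gi = Q ** (Pi ** P) ** Qi" unfolding g_def gi_def by (simp add: matrix_mul_assoc)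
  then have g1: "g ** gi = mat 1" using P(2) Q(1) by simp
  have "gi ** g = P ** (Qi ** Q) ** Pi" unfolding g_def gi_def by (simp add: matrix_mul_assoc)
  then have g2: "gi ** g = mat 1" using Q(2) P(1) by simp
  define \<phi> where "\<phi> = (\<lambda>x. g ** x ** gi)"
  have key: "\<phi> x = Q ** (Pi ** x ** P) ** Qi" for x unfolding \<phi>_def g_def gi_def by (simp add: matrix_mul_assoc)
  have bkw: "Pi ** x ** P = X" if "x ** P = P ** X" for x X
  proof -
    have "Pi ** x ** P = Pi ** (x ** P)" by (simp add: matrix_mul_assoc)
    also have "\<dots> = (Pi ** P) ** X" using that by (simp add: matrix_mul_assoc)
    finally show ?thesis using P(2) by simp
  qed
  have fwdw: "Q ** X ** Qi = x" if "x ** Q = Q ** X" for x X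
  proof -
    have "Q ** X ** Qi = (x ** Q) ** Qi" using that by simp
    also have "\<dots> = x ** (Q ** Qi)" by (simp add: matrix_mul_assoc)
    finally show ?thesis using Q(1) by simp
  qed
  have pu: "\<phi> u = u'" unfolding key bkw[OF P(3)] fwdw[OF Q(3)] ..
  have pv: "\<phi> v = v'" unfolding key bkw[OF P(4)] fwdw[OF Q(4)] ..
  have mult: "\<phi> (x ** y) = \<phi> x ** \<phi> y" for x y
  proof -
    have "\<phi> x ** \<phi> y = g ** x ** (gi ** g) ** y ** gi" unfolding \<phi>_def by (simp add: matrix_mul_assoc)
    then show ?thesis using g2 unfolding \<phi>_def by (simp add: matrix_mul_assoc)
  qed
  have puv: "\<phi> (u ** v) = u' ** v'" using mult pu pv by simp
  have img: "\<phi> ` H n = H' n" if "n \<le> 2" for n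
  proof -
    have "n = 0 \<or> n = 1 \<or> n = 2" using that by auto
    moreover have c: "\<phi> ` sp z = sp (\<phi> z)" for z unfolding \<phi>_def by (rule conj_sp)
    moreover have "\<phi> ` H 0 = H' 0" by (simp only: fr(6) fr'(6) c pu)
    moreover have "\<phi> ` H 1 = H' 1" by (simp only: fr(7) fr'(7) c pv)
    moreover have "\<phi> ` H 2 = H' 2" by (simp only: fr(8) fr'(8) c puv)
    ultimately show ?thesis by auto
  qed
  show ?thesis unfolding COD_conjugate_def
  proof (intro exI[of _ \<phi>] conjI allI impI)
    show "lie_automorphism \<phi>" unfolding \<phi>_def by (rule conj_aut[OF g1 g2])
    fix n :: nat assume n: "n \<le> 2"
    show "\<exists>!j. j \<le> 2 \<and> \<phi> ` H n = H' j"
    proof (rule ex1I[of _ n])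
      show "n \<le> 2 \<and> \<phi> ` H n = H' n" using n img by simp
      fix j assume "j \<le> 2 \<and> \<phi> ` H n = H' j"
      then have "j \<le> 2" "H' j = H' n" using img[OF n] by auto
      then show "j = n" using cod_distinct[OF ch H'] n by blast
    qed
  qed
qed

theorem corollary3p3:
  assumes "CHAR('a::{finite,field}) > 3"
  shows "((\<exists>H :: nat \<Rightarrow> 'a mat2 set. is_COD H)
           \<and> (\<forall>H H' :: nat \<Rightarrow> 'a mat2 set. is_COD H \<longrightarrow> is_COD H' \<longrightarrow> COD_conjugate H H'))
         \<longleftrightarrow> CARD('a) mod 4 = 1"
proof
  assume "(\<exists>H :: nat \<Rightarrow> 'a mat2 set. is_COD H)
           \<and> (\<forall>H H' :: nat \<Rightarrow> 'a mat2 set. is_COD H \<longrightarrow> is_COD H' \<longrightarrow> COD_conjugate H H')"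
  then obtain H :: "nat \<Rightarrow> 'a mat2 set" where "is_COD H" by blast
  then obtain t :: 'a where "t * t = -1" using cod_frame[OF assms] by blast
  then show "CARD('a) mod 4 = 1" using m1_mod4 char_nz[OF assms] by blast
next
  assume "CARD('a) mod 4 = 1"
  then obtain i :: 'a where i: "i * i = -1" using mod4_sq by blast
  show "(\<exists>H :: nat \<Rightarrow> 'a mat2 set. is_COD H)
           \<and> (\<forall>H H' :: nat \<Rightarrow> 'a mat2 set. is_COD H \<longrightarrow> is_COD H' \<longrightarrow> COD_conjugate H H')"
    using cod_exists[OF assms i] cod_unique[OF assms] by blast
qed

end
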